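(* If $a \geq 2$, then $I_{a,a} \geq \dfrac{r(r+1)}{2}$, where $r = P_a(2a-1)$.
   Context: $K_{a,a}$ is the complete bipartite graph with both partite sets of size $a$. $I_{a,a}$ denotes the number of isomorphism classes (as unlabeled graphs) of spanning trees of $K_{a,a}$. $P_k(m)$ denotes the number of integer partitions of $m$ into exactly $k$ positive parts. *)

theory Defs
  imports Complex_Main "HOL-Library.Multiset"
begin

definition adj :: "'v set set \<Rightarrow> 'v \<Rightarrow> 'v \<Rightarrow> bool" where
  "adj E u v \<longleftrightarrow> {u, v} \<in> E"

definition simple_graph :: "'v set \<Rightarrow> 'v set set \<Rightarrow> bool" where
  "simple_graph V E \<longleftrightarrow> (\<forall>e\<in>E. \<exists>u v. e = {u, v} \<and> u \<noteq> v \<and> u \<in> V \<and> v \<in> V)"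

definition connected_graph :: "'v set \<Rightarrow> 'v set set \<Rightarrow> bool" where
  "connected_graph V E \<longleftrightarrow> (\<forall>u\<in>V. \<forall>v\<in>V. (adj E)\<^sup>*\<^sup>* u v)"

definition is_cycle :: "'v set set \<Rightarrow> 'v list \<Rightarrow> bool" where
  "is_cycle E vs \<longleftrightarrow> length vs \<ge> 3 \<and> distinct vs \<and>
     (\<forall>i < length vs. {vs ! i, vs ! ((i + 1) mod length vs)} \<in> E)"

definition acyclic_graph :: "'v set set \<Rightarrow> bool" where
  "acyclic_graph E \<longleftrightarrow> \<not> (\<exists>vs. is_cycle E vs)"

definition is_tree :: "'v set \<Rightarrow> 'v set set \<Rightarrow> bool" where
  "is_tree V E \<longleftrightarrow> simple_graph V E \<and> connected_graph V E \<and> acyclic_graph E"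

definition Kaa_verts :: "nat \<Rightarrow> (nat + nat) set" where
  "Kaa_verts a = Inl ` {..<a} \<union> Inr ` {..<a}"

definition Kaa_edges :: "nat \<Rightarrow> (nat + nat) set set" where
  "Kaa_edges a = {{Inl i, Inr j} | i j. i < a \<and> j < a}"

definition spanning_tree_Kaa :: "nat \<Rightarrow> (nat + nat) set set \<Rightarrow> bool" where
  "spanning_tree_Kaa a T \<longleftrightarrow> T \<subseteq> Kaa_edges a \<and> is_tree (Kaa_verts a) T"

definition graph_iso :: "'v set \<Rightarrow> 'v set set \<Rightarrow> 'v set set \<Rightarrow> bool" where
  "graph_iso V E1 E2 \<longleftrightarrow> (\<exists>f. bij_betw f V V \<and>
      (\<forall>u\<in>V. \<forall>v\<in>V. {u, v} \<in> E1 \<longleftrightarrow> {f u, f v} \<in> E2))"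

definition I_aa :: "nat \<Rightarrow> nat" where
  "I_aa a = card ({T. spanning_tree_Kaa a T} //
      {(T1, T2). spanning_tree_Kaa a T1 \<and> spanning_tree_Kaa a T2 \<and>
                 graph_iso (Kaa_verts a) T1 T2})"

definition P_part :: "nat \<Rightarrow> nat \<Rightarrow> nat" where
  "P_part k m = card {p :: nat multiset. size p = k \<and> sum_mset p = m \<and> (\<forall>x\<in>#p. x > 0)}"

end

theory Submission
  imports Defs
begin

definition deg :: "'v set set \<Rightarrow> 'v \<Rightarrow> nat" where
  "deg T x = card {y. {x,y} \<in> T}"

lemma tree_single: "is_tree {x} {}"
  unfolding is_tree_def simple_graph_def connected_graph_def acyclic_graph_def is_cycle_def
  by (auto intro!: exI[of _ 0])

lemma simple_mem: "simple_graph V T \<Longrightarrow> {x,y} \<in> T \<Longrightarrow> x \<in> V \<and> y \<in> V"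
  unfolding simple_graph_def by (fastforce simp: doubleton_eq_iff)

lemma tree_add_leaf:
  assumes T: "is_tree V T" and v: "v \<notin> V" and w: "w \<in> V"
  shows "is_tree (insert v V) (insert {v,w} T)"
proof -
  have sT: "simple_graph V T" and cT: "connected_graph V T" and aT: "acyclic_graph T"
    using T by (auto simp: is_tree_def)
  let ?T = "insert {v,w} T"
  have vw: "v \<noteq> w" using v w by auto
  have s: "simple_graph (insert v V) ?T"
    using sT vw w unfolding simple_graph_def by blast
  have nbr: "y = w" if "{v,y} \<in> ?T" for y
  proof -
    have "{v,y} \<notin> T" using simple_mem[OF sT] v by blast
    then have "{v,y} = {v,w}" using that by auto
    then show ?thesis by (auto simp: doubleton_eq_iff)
  qed
  have le: "adj T \<le> adj ?T" by (auto simp: adj_def)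
  have mono: "(adj ?T)\<^sup>*\<^sup>* x y" if "(adj T)\<^sup>*\<^sup>* x y" for x y
    using rtranclp_mono[OF le] that by (metis predicate2D)
  have c: "connected_graph (insert v V) ?T"
    unfolding connected_graph_def
  proof (intro ballI)
    fix x y assume x: "x \<in> insert v V" and y: "y \<in> insert v V"
    have e1: "adj ?T v w" "adj ?T w v" by (auto simp: adj_def insert_commute)
    have wz: "(adj ?T)\<^sup>*\<^sup>* w z" "(adj ?T)\<^sup>*\<^sup>* z w" if "z \<in> V" for z
      using cT that w mono unfolding connected_graph_def by auto
    show "(adj ?T)\<^sup>*\<^sup>* x y"
    proof (cases "x = v")
      case True
      show ?thesis proof (cases "y = v")
        case True with \<open>x = v\<close> show ?thesis by simp
      next
        case False
        then have "y \<in> V" using y by auto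
        then show ?thesis using \<open>x=v\<close> e1 wz by (meson converse_rtranclp_into_rtranclp)
      qed
    next
      case False
      then have xV: "x \<in> V" using x by auto
      show ?thesis proof (cases "y = v")
        case True then show ?thesis using xV e1 wz by (meson rtranclp.rtrancl_into_rtrancl)
      next
        case False then have "y \<in> V" using y by auto
        then show ?thesis using xV cT mono unfolding connected_graph_def by auto
      qed
    qed
  qed
  have a: "acyclic_graph ?T"
    unfolding acyclic_graph_def
  proof
    assume "\<exists>vs. is_cycle ?T vs"
    then obtain vs where cy: "is_cycle ?T vs" by blast
    let ?L = "length vs"
    have L3: "?L \<ge> 3" and dist: "distinct vs"
      and ed: "\<And>i. i < ?L \<Longrightarrow> {vs!i, vs!((i+1) mod ?L)} \<in> ?T"
      using cy unfolding is_cycle_def by auto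
    show False
    proof (cases "v \<in> set vs")
      case False
      have "{vs!i, vs!((i+1) mod ?L)} \<in> T" if "i < ?L" for i
      proof -
        have "vs!i \<in> set vs" "vs!((i+1) mod ?L) \<in> set vs" using that L3 by (auto intro!: nth_mem mod_less_divisor)
        then have "{vs!i, vs!((i+1) mod ?L)} \<noteq> {v,w}" using False by (auto simp: doubleton_eq_iff)
        then show ?thesis using ed[OF that] by auto
      qed
      then have "is_cycle T vs" using L3 dist unfolding is_cycle_def by auto
      then show False using aT unfolding acyclic_graph_def by auto
    next
      case True
      then obtain k where k: "k < ?L" "vs!k = v" by (auto simp: in_set_conv_nth)
      define k0 where "k0 = (if k = 0 then ?L - 1 else k - 1)"
      have k0: "k0 < ?L" "(k0 + 1) mod ?L = k" using k L3 by (auto simp: k0_def)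
      have k1: "(k+1) mod ?L < ?L" using L3 by (auto intro: mod_less_divisor)
      have ne: "k0 \<noteq> (k+1) mod ?L"
      proof (cases "k + 1 < ?L")
        case True then show ?thesis using L3 by (auto simp: k0_def)
      next
        case False then have "k + 1 = ?L" using k by auto
        then show ?thesis using L3 by (auto simp: k0_def)
      qed
      have "{vs!k0, v} \<in> ?T" using ed[OF k0(1)] k0(2) k by simp
      then have "{v, vs!k0} \<in> ?T" by (simp add: insert_commute)
      then have 1: "vs!k0 = w" by (rule nbr)
      have "{v, vs!((k+1) mod ?L)} \<in> ?T" using ed[OF k(1)] k by simp
      then have 2: "vs!((k+1) mod ?L) = w" by (rule nbr)
      show False using 1 2 ne k0(1) k1 dist nth_eq_iff_index_eq by metis
    qed
  qed
  show ?thesis using s c a by (simp add: is_tree_def)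
qed

lemma deg_leaf:
  assumes s: "simple_graph V T" and fin: "finite V" and v: "v \<notin> V" and w: "w \<in> V"
  shows "deg (insert {v,w} T) v = 1"
    "deg (insert {v,w} T) w = Suc (deg T w)"
    "x \<noteq> v \<Longrightarrow> x \<noteq> w \<Longrightarrow> deg (insert {v,w} T) x = deg T x"
proof -
  have vw: "v \<noteq> w" using v w by auto
  have "{y. {v,y} \<in> insert {v,w} T} = {w}"
    using simple_mem[OF s] v by (auto simp: doubleton_eq_iff)
  then show "deg (insert {v,w} T) v = 1" by (simp add: deg_def)
  have sub: "{y. {w,y} \<in> T} \<subseteq> V" using simple_mem[OF s] by blast
  have "{y. {w,y} \<in> insert {v,w} T} = insert v {y. {w,y} \<in> T}"
    using vw by (auto simp: doubleton_eq_iff)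
  moreover have "v \<notin> {y. {w,y} \<in> T}" using sub v by blast
  moreover have "finite {y. {w,y} \<in> T}" using sub fin finite_subset by blast
  ultimately show "deg (insert {v,w} T) w = Suc (deg T w)" by (simp add: deg_def)
  assume "x \<noteq> v" "x \<noteq> w"
  then have "{y. {x,y} \<in> insert {v,w} T} = {y. {x,y} \<in> T}" by (auto simp: doubleton_eq_iff)
  then show "deg (insert {v,w} T) x = deg T x" by (simp add: deg_def)
qed


lemma tree_exists:
  "\<lbrakk>finite (A::nat set); finite (B::nat set); A \<noteq> {}; B \<noteq> {}; card A + card B = n;
    \<forall>i\<in>A. d i > 0; \<forall>j\<in>B. e j > 0;
    sum d A + 1 = card A + card B; sum e B + 1 = card A + card B\<rbrakk> \<Longrightarrow>
   \<exists>T. finite T \<and> T \<subseteq> {{Inl i, Inr j} | i j. i \<in> A \<and> j \<in> B} \<and>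
       is_tree (Inl ` A \<union> Inr ` B) T \<and>
       (\<forall>i\<in>A. deg T (Inl i) = d i) \<and> (\<forall>j\<in>B. deg T (Inr j) = e j)"
proof (induction n arbitrary: A B d e rule: less_induct)
  case (less n A B d e)
  note fA = less.prems(1) and fB = less.prems(2)
  have cA: "card A \<ge> 1" and cB: "card B \<ge> 1" using less.prems(1-4) card_0_eq by fastforce+
  show ?case
  proof (cases "n = 2")
    case True
    then have "card A = 1" "card B = 1" using cA cB less.prems(5) by auto
    then obtain i j where A: "A = {i}" and B: "B = {j}" by (auto simp: card_Suc_eq)
    have di: "d i = 1" and ej: "e j = 1" using less.prems(8,9) A B by auto
    have t: "is_tree (insert (Inl i) {Inr j}) (insert {Inl i, Inr j} {})"
      by (rule tree_add_leaf[OF tree_single]) auto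
    have s0: "simple_graph {Inr j} ({} :: (nat+nat) set set)" by (simp add: simple_graph_def)
    have "deg {{Inl i, Inr j}} (Inl i) = 1" "deg {{Inl i, Inr j}} (Inr j) = 1"
      using deg_leaf[OF s0, of "Inl i" "Inr j"] by (auto simp: deg_def)
    then show ?thesis using t di ej A B
      by (intro exI[of _ "{{Inl i, Inr j}}"]) (auto simp: insert_commute)
  next
    case False
    then have n3: "n \<ge> 3" using cA cB less.prems(5) by auto
    have leaf: "(\<exists>i\<in>A. d i = 1) \<or> (\<exists>j\<in>B. e j = 1)"
    proof (rule ccontr)
      assume "\<not> ?thesis"
      then have "\<forall>i\<in>A. 2 \<le> d i" "\<forall>j\<in>B. 2 \<le> e j" using less.prems(6,7)
        by (metis One_nat_def Suc_1 Suc_leI le_neq_implies_less)+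
      then have "card A * 2 \<le> sum d A" "card B * 2 \<le> sum e B"
        using sum_bounded_below[of A 2 d] sum_bounded_below[of B 2 e] by auto
      then show False using less.prems(8,9) by linarith
    qed
    show ?thesis
    proof (cases "\<exists>i\<in>A. d i = 1")
      case True
      then obtain i where i: "i \<in> A" "d i = 1" by blast
      have cA2: "card A \<ge> 2"
      proof (rule ccontr)
        assume "\<not> ?thesis"
        then have "card A = 1" using cA by auto
        then have "A = {i}" using i by (auto simp: card_Suc_eq)
        then show False using less.prems(5,8) i n3 by auto
      qed
      obtain j where j: "j \<in> B" "e j \<ge> 2"
      proof (rule ccontr)
        assume "\<not> thesis"
        then have "\<forall>j\<in>B. e j \<le> 1" using that by force
        then have "sum e B \<le> card B * 1" using sum_bounded_above[of B e 1] by auto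
        then show False using less.prems(9) cA2 by linarith
      qed
      define A' where "A' = A - {i}"
      define e' where "e' = e(j := e j - 1)"
      have cA': "card A' = card A - 1" using i fA by (simp add: A'_def)
      have sd: "sum d A = sum d A' + d i" using i fA by (simp add: A'_def sum.remove)
      have se: "sum e B = sum e (B - {j}) + e j" using j fB by (simp add: sum.remove)
      have se': "sum e' B = sum e' (B - {j}) + e' j" using j fB by (simp add: sum.remove)
      have se'2: "sum e' (B - {j}) = sum e (B - {j})" by (intro sum.cong) (auto simp: e'_def)
      have "\<exists>T. finite T \<and> T \<subseteq> {{Inl i, Inr j} | i j. i \<in> A' \<and> j \<in> B} \<and>
         is_tree (Inl ` A' \<union> Inr ` B) T \<and>
         (\<forall>i\<in>A'. deg T (Inl i) = d i) \<and> (\<forall>j\<in>B. deg T (Inr j) = e' j)"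
      proof (rule less.IH[of "card A' + card B"])
        show "card A' + card B < n" using less.prems(5) cA' cA2 by linarith
        have "card A' \<noteq> 0" using cA' cA2 by linarith
        then show "A' \<noteq> {}" by auto
        show "finite A'" using fA by (simp add: A'_def)
        show "\<forall>x\<in>A'. 0 < d x" using less.prems(6) by (simp add: A'_def)
        show "\<forall>x\<in>B. 0 < e' x" using less.prems(7) j(2) by (simp add: e'_def)
        show "sum d A' + 1 = card A' + card B" using less.prems(8) sd i(2) cA' cA2 by linarith
        have "e' j = e j - 1" by (simp add: e'_def)
        then show "sum e' B + 1 = card A' + card B" using less.prems(9) se se' se'2 j(2) cA' cA2 by linarith
      qed (use fB less.prems(4) in auto)
      then obtain T where T: "finite T" "T \<subseteq> {{Inl i, Inr j} | i j. i \<in> A' \<and> j \<in> B}"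
        "is_tree (Inl ` A' \<union> Inr ` B) T" "\<forall>i\<in>A'. deg T (Inl i) = d i" "\<forall>j\<in>B. deg T (Inr j) = e' j"
        by blast
      have vn: "Inl i \<notin> Inl ` A' \<union> Inr ` B" by (auto simp: A'_def)
      have wi: "Inr j \<in> Inl ` A' \<union> Inr ` B" using j by auto
      have sT: "simple_graph (Inl ` A' \<union> Inr ` B) T" using T(3) by (simp add: is_tree_def)
      have fV: "finite (Inl ` A' \<union> Inr ` B)" using fA fB by (simp add: A'_def)
      note D = deg_leaf[OF sT fV vn wi]
      have V: "insert (Inl i) (Inl ` A' \<union> Inr ` B) = Inl ` A \<union> Inr ` B" using i by (auto simp: A'_def)
      show ?thesis
      proof (intro exI[of _ "insert {Inl i, Inr j} T"] conjI ballI)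
        show "finite (insert {Inl i, Inr j} T)" using T(1) by simp
        show "insert {Inl i, Inr j} T \<subseteq> {{Inl i, Inr j} | i j. i \<in> A \<and> j \<in> B}"
          using T(2) i j unfolding A'_def by blast
        show "is_tree (Inl ` A \<union> Inr ` B) (insert {Inl i, Inr j} T)"
          using tree_add_leaf[OF T(3) vn wi] V by simp
        fix x assume "x \<in> A"
        then show "deg (insert {Inl i, Inr j} T) (Inl x) = d x"
          using D T(4) i by (cases "x = i") (auto simp: A'_def)
      next
        fix y assume "y \<in> B"
        then show "deg (insert {Inl i, Inr j} T) (Inr y) = e y"
          using D T(5) j by (cases "y = j") (auto simp: e'_def)
      qed
    next
      case False
      then obtain j where j: "j \<in> B" "e j = 1" using leaf by blast
      have cB2: "card B \<ge> 2"
      proof (rule ccontr)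
        assume "\<not> ?thesis"
        then have "card B = 1" using cB by auto
        then have "B = {j}" using j by (auto simp: card_Suc_eq)
        then show False using less.prems(5,9) j n3 by auto
      qed
      obtain i where i: "i \<in> A" "d i \<ge> 2"
      proof (rule ccontr)
        assume "\<not> thesis"
        then have "\<forall>i\<in>A. d i \<le> 1" using that by force
        then have "sum d A \<le> card A * 1" using sum_bounded_above[of A d 1] by auto
        then show False using less.prems(8) cB2 by linarith
      qed
      define B' where "B' = B - {j}"
      define d' where "d' = d(i := d i - 1)"
      have cB': "card B' = card B - 1" using j fB by (simp add: B'_def)
      have se: "sum e B = sum e B' + e j" using j fB by (simp add: B'_def sum.remove)
      have sd: "sum d A = sum d (A - {i}) + d i" using i fA by (simp add: sum.remove)
      have sd': "sum d' A = sum d' (A - {i}) + d' i" using i fA by (simp add: sum.remove)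
      have sd'2: "sum d' (A - {i}) = sum d (A - {i})" by (intro sum.cong) (auto simp: d'_def)
      have "\<exists>T. finite T \<and> T \<subseteq> {{Inl i, Inr j} | i j. i \<in> A \<and> j \<in> B'} \<and>
         is_tree (Inl ` A \<union> Inr ` B') T \<and>
         (\<forall>i\<in>A. deg T (Inl i) = d' i) \<and> (\<forall>j\<in>B'. deg T (Inr j) = e j)"
      proof (rule less.IH[of "card A + card B'"])
        show "card A + card B' < n" using less.prems(5) cB' cB2 by linarith
        have "card B' \<noteq> 0" using cB' cB2 by linarith
        then show "B' \<noteq> {}" by auto
        show "finite B'" using fB by (simp add: B'_def)
        show "\<forall>x\<in>B'. 0 < e x" using less.prems(7) by (simp add: B'_def)
        show "\<forall>x\<in>A. 0 < d' x" using less.prems(6) i(2) by (simp add: d'_def)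
        show "sum e B' + 1 = card A + card B'" using less.prems(9) se j(2) cB' cB2 by linarith
        have "d' i = d i - 1" by (simp add: d'_def)
        then show "sum d' A + 1 = card A + card B'" using less.prems(8) sd sd' sd'2 i(2) cB' cB2 by linarith
      qed (use fA less.prems(3) in auto)
      then obtain T where T: "finite T" "T \<subseteq> {{Inl i, Inr j} | i j. i \<in> A \<and> j \<in> B'}"
        "is_tree (Inl ` A \<union> Inr ` B') T" "\<forall>i\<in>A. deg T (Inl i) = d' i" "\<forall>j\<in>B'. deg T (Inr j) = e j"
        by blast
      have vn: "Inr j \<notin> Inl ` A \<union> Inr ` B'" by (auto simp: B'_def)
      have wi: "Inl i \<in> Inl ` A \<union> Inr ` B'" using i by auto
      have sT: "simple_graph (Inl ` A \<union> Inr ` B') T" using T(3) by (simp add: is_tree_def)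
      have fV: "finite (Inl ` A \<union> Inr ` B')" using fA fB by (simp add: B'_def)
      note D = deg_leaf[OF sT fV vn wi]
      have V: "insert (Inr j) (Inl ` A \<union> Inr ` B') = Inl ` A \<union> Inr ` B" using j by (auto simp: B'_def)
      have E: "{Inr j, Inl i} = {Inl i, Inr j}" by (simp add: insert_commute)
      show ?thesis
      proof (intro exI[of _ "insert {Inr j, Inl i} T"] conjI ballI)
        show "finite (insert {Inr j, Inl i} T)" using T(1) by simp
        show "insert {Inr j, Inl i} T \<subseteq> {{Inl i, Inr j} | i j. i \<in> A \<and> j \<in> B}"
          using T(2) i j unfolding B'_def E by blast
        show "is_tree (Inl ` A \<union> Inr ` B) (insert {Inr j, Inl i} T)"
          using tree_add_leaf[OF T(3) vn wi] V by simp
        fix x assume "x \<in> A"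
        then show "deg (insert {Inr j, Inl i} T) (Inl x) = d x"
          using D T(4) i by (cases "x = i") (auto simp: d'_def)
      next
        fix y assume "y \<in> B"
        then show "deg (insert {Inr j, Inl i} T) (Inr y) = e y"
          using D T(5) j by (cases "y = j") (auto simp: B'_def)
      qed
    qed
  qed
qed


definition Lm :: "nat \<Rightarrow> (nat+nat) set set \<Rightarrow> nat multiset" where
  "Lm a T = image_mset (deg T) (mset_set (Inl ` {..<a}))"
definition Rm :: "nat \<Rightarrow> (nat+nat) set set \<Rightarrow> nat multiset" where
  "Rm a T = image_mset (deg T) (mset_set (Inr ` {..<a}))"
definition Phi :: "nat \<Rightarrow> (nat+nat) set set \<Rightarrow> nat multiset multiset" where
  "Phi a T = {# Lm a T, Rm a T #}"

lemma kaa_edge: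
  assumes "{x,y} \<in> Kaa_edges a"
  shows "x \<in> Kaa_verts a \<and> y \<in> Kaa_verts a \<and> (isl x \<longleftrightarrow> \<not> isl y)"
  using assms unfolding Kaa_edges_def Kaa_verts_def by (auto simp: doubleton_eq_iff)

lemma deg_iso:
  assumes f: "bij_betw f V V" and iso: "\<forall>u\<in>V. \<forall>v\<in>V. {u,v} \<in> E1 \<longleftrightarrow> {f u, f v} \<in> E2"
    and s1: "simple_graph V E1" and s2: "simple_graph V E2" and u: "u \<in> V"
  shows "deg E2 (f u) = deg E1 u"
proof -
  have "{y. {f u, y} \<in> E2} = f ` {y. {u,y} \<in> E1}"
  proof
    show "f ` {y. {u,y} \<in> E1} \<subseteq> {y. {f u, y} \<in> E2}" using iso u simple_mem[OF s1] by blast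
    show "{y. {f u, y} \<in> E2} \<subseteq> f ` {y. {u,y} \<in> E1}"
    proof
      fix y assume "y \<in> {y. {f u, y} \<in> E2}"
      then have y: "{f u, y} \<in> E2" by simp
      then have "y \<in> V" using simple_mem[OF s2] by blast
      then obtain y' where "y' \<in> V" "y = f y'" using f by (metis bij_betw_def imageE)
      then show "y \<in> f ` {y. {u,y} \<in> E1}" using iso u y by auto
    qed
  qed
  moreover have "inj_on f {y. {u,y} \<in> E1}"
    using f simple_mem[OF s1] unfolding bij_betw_def by (meson inj_on_subset subsetI mem_Collect_eq)
  ultimately show ?thesis by (simp add: deg_def card_image)
qed

lemma side_const:
  assumes T1: "spanning_tree_Kaa a T1" and T2: "spanning_tree_Kaa a T2"
   and iso: "\<forall>u\<in>Kaa_verts a. \<forall>v\<in>Kaa_verts a. {u,v} \<in> T1 \<longleftrightarrow> {f u, f v} \<in> T2"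
   and u: "u \<in> Kaa_verts a" and v: "v \<in> Kaa_verts a"
  shows "(isl (f u) \<longleftrightarrow> isl u) \<longleftrightarrow> (isl (f v) \<longleftrightarrow> isl v)"
proof -
  have "(adj T1)\<^sup>*\<^sup>* u v" using T1 u v
    unfolding spanning_tree_Kaa_def is_tree_def connected_graph_def by blast
  then show ?thesis
  proof (induction rule: rtranclp_induct)
    case base then show ?case by simp
  next
    case (step y z)
    have e: "{y,z} \<in> T1" using step(2) by (simp add: adj_def)
    then have k: "y \<in> Kaa_verts a \<and> z \<in> Kaa_verts a \<and> (isl y \<longleftrightarrow> \<not> isl z)"
      using T1 kaa_edge unfolding spanning_tree_Kaa_def by blast
    then have "{f y, f z} \<in> T2" using iso e by blast
    then have "isl (f y) \<longleftrightarrow> \<not> isl (f z)" using T2 kaa_edge unfolding spanning_tree_Kaa_def by blast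
    then show ?case using step(3) k by blast
  qed
qed

lemma Phi_iso:
  assumes T1: "spanning_tree_Kaa a T1" and T2: "spanning_tree_Kaa a T2"
    and g: "graph_iso (Kaa_verts a) T1 T2" and a: "a \<ge> 1"
  shows "Phi a T1 = Phi a T2"
proof -
  let ?V = "Kaa_verts a"
  let ?L = "Inl ` {..<a} :: (nat+nat) set"
  let ?R = "Inr ` {..<a} :: (nat+nat) set"
  obtain f where f: "bij_betw f ?V ?V" and iso: "\<forall>u\<in>?V. \<forall>v\<in>?V. {u,v} \<in> T1 \<longleftrightarrow> {f u, f v} \<in> T2"
    using g unfolding graph_iso_def by blast
  have s1: "simple_graph ?V T1" and s2: "simple_graph ?V T2"
    using T1 T2 by (auto simp: spanning_tree_Kaa_def is_tree_def)
  have V: "?V = ?L \<union> ?R" by (simp add: Kaa_verts_def)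
  have fin: "finite ?V" by (simp add: Kaa_verts_def)
  have fV: "f u \<in> ?V" if "u \<in> ?V" for u using f that bij_betwE by blast
  have cL: "card ?L = a" and cR: "card ?R = a" by (simp_all add: card_image)
  have mL: "image_mset (deg T2) (mset_set (f ` X)) = image_mset (deg T1) (mset_set X)" if X: "X \<subseteq> ?V" for X
  proof -
    have inj: "inj_on f X" using f X by (meson bij_betw_def inj_on_subset)
    have fX: "finite X" using X fin finite_subset by blast
    have "image_mset (deg T2) (mset_set (f ` X)) = image_mset (deg T2) (image_mset f (mset_set X))"
      by (simp add: image_mset_mset_set[OF inj])
    also have "\<dots> = image_mset (deg T2 \<circ> f) (mset_set X)" by (simp add: multiset.map_comp)
    also have "\<dots> = image_mset (deg T1) (mset_set X)"
    proof (rule image_mset_cong)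
      fix x assume "x \<in># mset_set X"
      then have "x \<in> X" using fX by simp
      then show "(deg T2 \<circ> f) x = deg T1 x" using deg_iso[OF f iso s1 s2] X by auto
    qed
    finally show ?thesis .
  qed
  have injL: "card (f ` X) = card X" if "X \<subseteq> ?V" for X
    using f that by (meson bij_betw_def inj_on_subset card_image)
  have u0: "Inl 0 \<in> ?V" using a by (simp add: Kaa_verts_def)
  have sideL: "u \<in> ?L \<longleftrightarrow> isl u" if "u \<in> ?V" for u using that V by auto
  have sideR: "u \<in> ?R \<longleftrightarrow> \<not> isl u" if "u \<in> ?V" for u using that V by auto
  show ?thesis
  proof (cases "isl (f (Inl 0))")
    case True
    then have P: "isl (f u) \<longleftrightarrow> isl u" if "u \<in> ?V" for u using side_const[OF T1 T2 iso u0 that] by simp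
    have "f ` ?L \<subseteq> ?L"
    proof
      fix y assume "y \<in> f ` ?L"
      then obtain u where u: "u \<in> ?L" "y = f u" by blast
      then have uV: "u \<in> ?V" using V by blast
      have "u \<in> ?L \<longleftrightarrow> isl u" "u \<in> ?R \<longleftrightarrow> \<not> isl u" using sideL[OF uV] sideR[OF uV] by auto
      moreover have "f u \<in> ?L \<longleftrightarrow> isl (f u)" "f u \<in> ?R \<longleftrightarrow> \<not> isl (f u)" using sideL[OF fV[OF uV]] sideR[OF fV[OF uV]] by auto
      moreover note P[OF uV]
      ultimately show "y \<in> ?L" using u by blast
    qed
    then have eL: "f ` ?L = ?L" proof -
      have "card (f ` ?L) = card ?L" using injL[of ?L] V cL cR by simp
      then show ?thesis using card_subset_eq[OF _ \<open>f ` ?L \<subseteq> ?L\<close>] by simp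
    qed
    have "f ` ?R \<subseteq> ?R"
    proof
      fix y assume "y \<in> f ` ?R"
      then obtain u where u: "u \<in> ?R" "y = f u" by blast
      then have uV: "u \<in> ?V" using V by blast
      have "u \<in> ?L \<longleftrightarrow> isl u" "u \<in> ?R \<longleftrightarrow> \<not> isl u" using sideL[OF uV] sideR[OF uV] by auto
      moreover have "f u \<in> ?L \<longleftrightarrow> isl (f u)" "f u \<in> ?R \<longleftrightarrow> \<not> isl (f u)" using sideL[OF fV[OF uV]] sideR[OF fV[OF uV]] by auto
      moreover note P[OF uV]
      ultimately show "y \<in> ?R" using u by blast
    qed
    then have eR: "f ` ?R = ?R" proof -
      have "card (f ` ?R) = card ?R" using injL[of ?R] V cL cR by simp
      then show ?thesis using card_subset_eq[OF _ \<open>f ` ?R \<subseteq> ?R\<close>] by simp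
    qed
    have "Lm a T2 = Lm a T1" unfolding Lm_def using mL[of ?L] eL V by auto
    moreover have "Rm a T2 = Rm a T1" unfolding Rm_def using mL[of ?R] eR V by auto
    ultimately show ?thesis by (simp add: Phi_def)
  next
    case False
    then have P: "isl (f u) \<longleftrightarrow> \<not> isl u" if "u \<in> ?V" for u using side_const[OF T1 T2 iso u0 that] by simp
    have "f ` ?L \<subseteq> ?R"
    proof
      fix y assume "y \<in> f ` ?L"
      then obtain u where u: "u \<in> ?L" "y = f u" by blast
      then have uV: "u \<in> ?V" using V by blast
      have "u \<in> ?L \<longleftrightarrow> isl u" "u \<in> ?R \<longleftrightarrow> \<not> isl u" using sideL[OF uV] sideR[OF uV] by auto
      moreover have "f u \<in> ?L \<longleftrightarrow> isl (f u)" "f u \<in> ?R \<longleftrightarrow> \<not> isl (f u)" using sideL[OF fV[OF uV]] sideR[OF fV[OF uV]] by auto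
      moreover note P[OF uV]
      ultimately show "y \<in> ?R" using u by blast
    qed
    then have eL: "f ` ?L = ?R" proof -
      have "card (f ` ?L) = card ?R" using injL[of ?L] V cL cR by simp
      then show ?thesis using card_subset_eq[OF _ \<open>f ` ?L \<subseteq> ?R\<close>] by simp
    qed
    have "f ` ?R \<subseteq> ?L"
    proof
      fix y assume "y \<in> f ` ?R"
      then obtain u where u: "u \<in> ?R" "y = f u" by blast
      then have uV: "u \<in> ?V" using V by blast
      have "u \<in> ?L \<longleftrightarrow> isl u" "u \<in> ?R \<longleftrightarrow> \<not> isl u" using sideL[OF uV] sideR[OF uV] by auto
      moreover have "f u \<in> ?L \<longleftrightarrow> isl (f u)" "f u \<in> ?R \<longleftrightarrow> \<not> isl (f u)" using sideL[OF fV[OF uV]] sideR[OF fV[OF uV]] by auto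
      moreover note P[OF uV]
      ultimately show "y \<in> ?L" using u by blast
    qed
    then have eR: "f ` ?R = ?L" proof -
      have "card (f ` ?R) = card ?L" using injL[of ?R] V cL cR by simp
      then show ?thesis using card_subset_eq[OF _ \<open>f ` ?R \<subseteq> ?L\<close>] by simp
    qed
    have "Rm a T2 = Lm a T1" unfolding Lm_def Rm_def using mL[of ?L] eL V by auto
    moreover have "Lm a T2 = Rm a T1" unfolding Lm_def Rm_def using mL[of ?R] eR V by auto
    ultimately show ?thesis by (simp add: Phi_def add_mset_commute)
  qed
qed

lemma card_quot_ge:
  assumes fin: "finite A" and refl: "\<And>x. x \<in> A \<Longrightarrow> (x,x) \<in> R"
    and inv: "\<And>x y. (x,y) \<in> R \<Longrightarrow> g x = g y"
  shows "card (g ` A) \<le> card (A // R)"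
proof -
  define h where "h C = g (SOME y. y \<in> C)" for C
  have "g ` A \<subseteq> h ` (A // R)"
  proof
    fix z assume "z \<in> g ` A"
    then obtain x where x: "x \<in> A" "z = g x" by blast
    have C: "R `` {x} \<in> A // R" using x by (auto simp: quotient_def)
    have "x \<in> R `` {x}" using refl x by auto
    then have "(SOME y. y \<in> R `` {x}) \<in> R `` {x}" by (rule someI)
    then have "h (R `` {x}) = g x" using inv by (auto simp: h_def)
    then show "z \<in> h ` (A // R)" using C x by force
  qed
  moreover have "finite (A // R)" using fin by (simp add: quotient_def)
  ultimately show ?thesis by (meson card_image_le card_mono finite_imageI le_trans)
qed

definition UP :: "'a multiset set \<Rightarrow> 'a multiset multiset set" where
  "UP S = {{#p,q#} | p q. p \<in> S \<and> q \<in> S}"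

lemma card_UP: "finite S \<Longrightarrow> 2 * card (UP S) = card S * (card S + 1) \<and> finite (UP S)"
proof (induction rule: finite_induct)
  case empty then show ?case by (simp add: UP_def)
next
  case (insert x S)
  have eq: "UP (insert x S) = UP S \<union> (\<lambda>q. {#x,q#}) ` (insert x S)"
    unfolding UP_def by (auto simp: add_mset_commute)
  have disj: "UP S \<inter> (\<lambda>q. {#x,q#}) ` (insert x S) = {}"
  proof (rule ccontr)
    assume "\<not> ?thesis"
    then obtain p q q' where "p \<in> S" "q \<in> S" "{#p,q#} = {#x,q'#}" unfolding UP_def by blast
    moreover have "x \<in># {#x,q'#}" by simp
    ultimately show False using insert(2) by (metis insert_iff set_mset_add_mset_insert set_mset_empty singletonD empty_iff)
  qed
  have inj: "inj_on (\<lambda>q. {#x,q#}) (insert x S)" by (auto simp: inj_on_def)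
  have c: "card ((\<lambda>q. {#x,q#}) ` (insert x S)) = card S + 1"
    using card_image[OF inj] insert by simp
  have fU: "finite (UP S)" using insert.IH by blast
  have "card (UP S \<union> (\<lambda>q. {#x,q#}) ` (insert x S)) = card (UP S) + card ((\<lambda>q. {#x,q#}) ` (insert x S))"
    by (rule card_Un_disjoint) (use fU disj insert(1) in auto)
  then have "card (UP (insert x S)) = card (UP S) + (card S + 1)"
    using eq c by simp
  then show ?case using insert eq by (simp add: algebra_simps)
qed


definition Parts :: "nat \<Rightarrow> nat multiset set" where
  "Parts a = {p :: nat multiset. size p = a \<and> sum_mset p = 2 * a - 1 \<and> (\<forall>x\<in>#p. x > 0)}"

lemma Kaa_edges_eq: "Kaa_edges a = {{Inl i, Inr j} | i j. i \<in> {..<a} \<and> j \<in> {..<a}}"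
  by (auto simp: Kaa_edges_def)

lemma Kaa_verts_eq: "Kaa_verts a = Inl ` {..<a} \<union> Inr ` {..<a}"
  by (simp add: Kaa_verts_def)

lemma list_mset_props:
  assumes "p \<in> Parts a" and a1: "a \<ge> 1"
  obtains xs where "mset xs = p" "length xs = a" "sum (\<lambda>i. xs ! i) {..<a} + 1 = a + a"
    "\<forall>i\<in>{..<a}. xs ! i > 0"
    "image_mset (\<lambda>i. xs ! i) (mset_set {..<a}) = p"
proof -
  obtain xs where xs: "mset xs = p" using ex_mset by blast
  have p: "size p = a" "sum_mset p = 2 * a - 1" "\<forall>x\<in>#p. x > 0" using assms by (auto simp: Parts_def)
  have l: "length xs = a" using xs p by (metis size_mset)
  have "sum (\<lambda>i. xs ! i) {..<a} = sum_list xs"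
    using l by (simp add: sum_list_sum_nth lessThan_atLeast0)
  also have "\<dots> = 2 * a - 1" using xs p by (metis sum_mset_sum_list)
  finally have s: "sum (\<lambda>i. xs ! i) {..<a} + 1 = a + a" using a1 by linarith
  have pos: "\<forall>i\<in>{..<a}. xs ! i > 0"
  proof
    fix i assume "i \<in> {..<a}"
    then have "xs ! i \<in> set xs" using l by simp
    then have "xs ! i \<in># p" using xs by (metis set_mset_mset)
    then show "xs ! i > 0" using p(3) by blast
  qed
  have "image_mset (\<lambda>i. xs ! i) (mset_set {..<a}) = mset (map (\<lambda>i. xs ! i) [0..<a])"
    by (simp add: lessThan_atLeast0)
  also have "\<dots> = mset xs" using l by (metis map_nth)
  also have "\<dots> = p" by (rule xs)
  finally have im: "image_mset (\<lambda>i. xs ! i) (mset_set {..<a}) = p" .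
  show ?thesis by (rule that[OF xs l s pos im])
qed

lemma realize:
  assumes p: "p \<in> Parts a" and q: "q \<in> Parts a" and a: "a \<ge> 1"
  shows "\<exists>T. spanning_tree_Kaa a T \<and> Phi a T = {#p,q#}"
proof -
  obtain xs where xs: "mset xs = p" "length xs = a" "sum (\<lambda>i. xs ! i) {..<a} + 1 = a + a"
    "\<forall>i\<in>{..<a}. xs ! i > 0" "image_mset (\<lambda>i. xs ! i) (mset_set {..<a}) = p"
    by (rule list_mset_props[OF p a])
  obtain ys where ys: "mset ys = q" "length ys = a" "sum (\<lambda>i. ys ! i) {..<a} + 1 = a + a"
    "\<forall>i\<in>{..<a}. ys ! i > 0" "image_mset (\<lambda>i. ys ! i) (mset_set {..<a}) = q"
    by (rule list_mset_props[OF q a])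
  have "0 \<in> {..<a}" using a by simp
  then have ne: "{..<a} \<noteq> {}" by blast
  obtain T where T: "finite T" "T \<subseteq> {{Inl i, Inr j} | i j. i \<in> {..<a} \<and> j \<in> {..<a}}"
    "is_tree (Inl ` {..<a} \<union> Inr ` {..<a}) T"
    "\<forall>i\<in>{..<a}. deg T (Inl i) = xs ! i" "\<forall>j\<in>{..<a}. deg T (Inr j) = ys ! j"
  proof -
    have "\<exists>T. finite T \<and> T \<subseteq> {{Inl i, Inr j} | i j. i \<in> {..<a} \<and> j \<in> {..<a}} \<and>
       is_tree (Inl ` {..<a} \<union> Inr ` {..<a}) T \<and>
       (\<forall>i\<in>{..<a}. deg T (Inl i) = xs ! i) \<and> (\<forall>j\<in>{..<a}. deg T (Inr j) = ys ! j)"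
      by (rule tree_exists[where n = "a + a"]) (use xs(3,4) ys(3,4) ne in simp_all)
    then show ?thesis using that by blast
  qed
  have st: "spanning_tree_Kaa a T" using T unfolding spanning_tree_Kaa_def Kaa_edges_eq Kaa_verts_eq by blast
  have "Lm a T = image_mset (deg T) (image_mset Inl (mset_set {..<a}))"
    unfolding Lm_def by (simp add: image_mset_mset_set)
  also have "\<dots> = image_mset (\<lambda>i. xs ! i) (mset_set {..<a})"
    by (simp add: multiset.map_comp, rule image_mset_cong) (use T(4) in auto)
  finally have L: "Lm a T = p" using xs by simp
  have "Rm a T = image_mset (deg T) (image_mset Inr (mset_set {..<a}))"
    unfolding Rm_def by (simp add: image_mset_mset_set)
  also have "\<dots> = image_mset (\<lambda>i. ys ! i) (mset_set {..<a})"
    by (simp add: multiset.map_comp, rule image_mset_cong) (use T(5) in auto)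
  finally have R: "Rm a T = q" using ys by simp
  show ?thesis using st L R by (auto simp: Phi_def)
qed

theorem theorem2p4:
  fixes a :: nat
  assumes "a \<ge> 2"
  shows "real (I_aa a) \<ge> real (P_part a (2 * a - 1) * (P_part a (2 * a - 1) + 1)) / 2"
proof -
  define ST where "ST = {T. spanning_tree_Kaa a T}"
  define R where "R = {(T1, T2). spanning_tree_Kaa a T1 \<and> spanning_tree_Kaa a T2 \<and>
                 graph_iso (Kaa_verts a) T1 T2}"
  have I: "I_aa a = card (ST // R)" by (simp add: I_aa_def ST_def R_def)
  have r: "P_part a (2 * a - 1) = card (Parts a)" by (simp add: P_part_def Parts_def)
  have fE: "finite (Kaa_edges a)"
  proof -
    have "Kaa_edges a = (\<lambda>(i,j). {Inl i, Inr j}) ` ({..<a} \<times> {..<a})" by (auto simp: Kaa_edges_def)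
    then show ?thesis by simp
  qed
  have fST: "finite ST"
    by (rule finite_subset[of _ "Pow (Kaa_edges a)"]) (use fE in \<open>auto simp: ST_def spanning_tree_Kaa_def\<close>)
  have refl: "(T, T) \<in> R" if "T \<in> ST" for T
  proof -
    have "graph_iso (Kaa_verts a) T T" unfolding graph_iso_def by (rule exI[of _ id]) simp
    then show ?thesis using that by (simp add: R_def ST_def)
  qed
  have inv: "Phi a T1 = Phi a T2" if "(T1, T2) \<in> R" for T1 T2
    using that Phi_iso[of a T1 T2] assms by (simp add: R_def)
  have c1: "card (Phi a ` ST) \<le> card (ST // R)" by (rule card_quot_ge[OF fST refl inv])
  have sub: "UP (Parts a) \<subseteq> Phi a ` ST"
  proof
    fix z assume "z \<in> UP (Parts a)"
    then obtain p q where "p \<in> Parts a" "q \<in> Parts a" "z = {#p,q#}" by (auto simp: UP_def)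
    then obtain T where "spanning_tree_Kaa a T" "Phi a T = z" using realize assms by force
    then show "z \<in> Phi a ` ST" by (auto simp: ST_def)
  qed
  have c2: "card (UP (Parts a)) \<le> card (Phi a ` ST)" using card_mono[OF finite_imageI[OF fST] sub] .
  have key: "card (Parts a) * (card (Parts a) + 1) \<le> 2 * I_aa a"
  proof (cases "finite (Parts a)")
    case True
    then show ?thesis using card_UP[OF True] c1 c2 I by linarith
  next
    case False then show ?thesis by simp
  qed
  have h: "real (card (Parts a) * (card (Parts a) + 1)) \<le> real (2 * I_aa a)"
    using key by (simp only: of_nat_le_iff)
  then show ?thesis unfolding r by simp
qed


end
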